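(* For every $n\in\mathbb{N}$ and every $l\in\{0,\ldots,n-1\}$ the polynomials $A_n^l$ defined in the context satisfy the two-step recurrence $$A_{n+1}^{l}=\frac{n+1}{2(n-l+1)(n+l+2)}\Big[\big((2n+3)\mathbf{x}+(2n+1)\overline{\mathbf{x}}\big)A_{n}^{l}-2n\,\mathbf{x}\overline{\mathbf{x}}\,A_{n-1}^{l}\Big],$$ and for every $l\in\mathbb{N}_0$, $$A_{l+1}^{l}=\tfrac14\big[(2l+3)\mathbf{x}+(2l+1)\overline{\mathbf{x}}\big]A_{l}^{l},\qquad A_{l}^{l}=(x_1-x_2\mathbf{e}_3)^l .$$
   Context: $\mathbb{H}$: real quaternions with basis $\mathbf{e}_0=1,\mathbf{e}_1,\mathbf{e}_2,\mathbf{e}_3$, $\mathbf{e}_i\mathbf{e}_j+\mathbf{e}_j\mathbf{e}_i=-2\delta_{ij}$ ($i,j=1,2,3$), $\mathbf{e}_1\mathbf{e}_2=\mathbf{e}_3$. A point $(x_0,x_1,x_2)\in\mathbb{R}^3$ is identified with $\mathbf{x}=x_0+x_1\mathbf{e}_1+x_2\mathbf{e}_2$, and $\overline{\mathbf{x}}=x_0-x_1\mathbf{e}_1-x_2\mathbf{e}_2$. Spherical coordinates: $x_0=r\cos\theta$, $x_1=r\sin\theta\cos\varphi$, $x_2=r\sin\theta\sin\varphi$. Let $P_k$ be the Legendre polynomials and $P_k^m(t)=(1-t^2)^{m/2}\frac{d^m}{dt^m}P_k(t)$ (no Condon–Shortley phase; $P_k^m=0$ for $m>k$). For $n\in\mathbb{N}_0$,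 $0\le m\le n+1$ put $$\mathcal{A}^{m,n}(\theta)=\tfrac12\Big(\sin^2\theta\,\tfrac{d}{dt}[P_{n+1}^m(t)]_{t=\cos\theta}+(n+1)\cos\theta\,P_{n+1}^m(\cos\theta)\Big).$$ For $n\in\mathbb{N}_0$, $l=0,\ldots,n$ define $$A_n^l(\mathbf{x})=\frac{2^{l+1}n!\,r^n}{(n+l+2)!}\Big[(n+l+2)\mathcal{A}^{l,n}(\theta)\big(\cos l\varphi-\sin l\varphi\,\mathbf{e}_3\big)+\mathcal{A}^{l+1,n}(\theta)\big(\cos((l+1)\varphi)\,\mathbf{e}_1+\sin((l+1)\varphi)\,\mathbf{e}_2\big)\Big],$$ a homogeneous polynomial of degree $n$ in $x_0,x_1,x_2$. *)

theory Defs
  imports "HOL-Analysis.Analysis" "HOL-Computational_Algebra.Polynomial"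
begin

text \<open>Quaternion q0 + q1 e1 + q2 e2 + q3 e3 with e1 e2 = e3, ei^2 = -1.\<close>

datatype quat = Quat (q0: real) (q1: real) (q2: real) (q3: real)

instantiation quat :: real_algebra_1
begin

definition "0 = Quat 0 0 0 0"
definition "1 = Quat 1 0 0 0"
definition "a + b = Quat (q0 a + q0 b) (q1 a + q1 b) (q2 a + q2 b) (q3 a + q3 b)"
definition "a - b = Quat (q0 a - q0 b) (q1 a - q1 b) (q2 a - q2 b) (q3 a - q3 b)"
definition "- a = Quat (- q0 a) (- q1 a) (- q2 a) (- q3 a)"
definition "scaleR c a = Quat (c * q0 a) (c * q1 a) (c * q2 a) (c * q3 a)"
definition "a * b = Quat
   (q0 a * q0 b - q1 a * q1 b - q2 a * q2 b - q3 a * q3 b)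
   (q0 a * q1 b + q1 a * q0 b + q2 a * q3 b - q3 a * q2 b)
   (q0 a * q2 b - q1 a * q3 b + q2 a * q0 b + q3 a * q1 b)
   (q0 a * q3 b + q1 a * q2 b - q2 a * q1 b + q3 a * q0 b)"

instance
  by standard (auto simp: zero_quat_def one_quat_def plus_quat_def minus_quat_def
      uminus_quat_def scaleR_quat_def times_quat_def algebra_simps intro: quat.expand)

end

definition qe1 :: quat where "qe1 = Quat 0 1 0 0"
definition qe2 :: quat where "qe2 = Quat 0 0 1 0"
definition qe3 :: quat where "qe3 = Quat 0 0 0 1"

definition vecq :: "real \<Rightarrow> real \<Rightarrow> real \<Rightarrow> quat" where
  "vecq x0 x1 x2 = of_real x0 + x1 *\<^sub>R qe1 + x2 *\<^sub>R qe2"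
definition vecq_cnj :: "real \<Rightarrow> real \<Rightarrow> real \<Rightarrow> quat" where
  "vecq_cnj x0 x1 x2 = of_real x0 - x1 *\<^sub>R qe1 - x2 *\<^sub>R qe2"

definition legendre :: "nat \<Rightarrow> real poly" where
  "legendre k = smult (1 / (2 ^ k * fact k)) ((pderiv ^^ k) ([:-1, 0, 1:] ^ k))"

text \<open>P_k^m(t) = (1-t^2)^(m/2) (d/dt)^m P_k(t), no Condon--Shortley phase.\<close>
definition assoc_legendre :: "nat \<Rightarrow> nat \<Rightarrow> real \<Rightarrow> real" where
  "assoc_legendre k m t = sqrt (1 - t\<^sup>2) ^ m * poly ((pderiv ^^ m) (legendre k)) t"

definition calA :: "nat \<Rightarrow> nat \<Rightarrow> real \<Rightarrow> real" where
  "calA m n \<theta> = (1/2) * ((sin \<theta>)\<^sup>2 * deriv (assoc_legendre (n + 1) m) (cos \<theta>)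
      + real (n + 1) * cos \<theta> * assoc_legendre (n + 1) m (cos \<theta>))"

text \<open>A_n^l evaluated at the point with spherical coordinates (r, theta, phi).\<close>
definition An :: "nat \<Rightarrow> nat \<Rightarrow> real \<Rightarrow> real \<Rightarrow> real \<Rightarrow> quat" where
  "An n l r \<theta> \<phi> =
     (2 ^ (l + 1) * fact n * r ^ n / fact (n + l + 2)) *\<^sub>R
       ((real (n + l + 2) * calA l n \<theta>) *\<^sub>R (of_real (cos (real l * \<phi>)) - sin (real l * \<phi>) *\<^sub>R qe3)
        + calA (l + 1) n \<theta> *\<^sub>R (cos (real (l + 1) * \<phi>) *\<^sub>R qe1 + sin (real (l + 1) * \<phi>) *\<^sub>R qe2))"

end

theory Submission
  imports Defs
begin


abbreviation D :: "nat \<Rightarrow> real poly \<Rightarrow> real poly" where "D m \<equiv> pderiv ^^ m"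

lemma D_add: "D m (p + q) = D m p + D m q"
  by (induction m) (simp_all add: pderiv_add)
lemma D_diff: "D m (p - q) = D m p - D m q"
  by (induction m) (simp_all add: pderiv_diff)
lemma D_smult: "D m (smult c p) = smult c (D m p)"
  by (induction m) (simp_all add: pderiv_smult)
lemma D_Suc: "D (Suc m) p = D m (pderiv p)"
  by (simp add: funpow_swap1)
lemma D_comp: "D m (D j p) = D (m + j) p"
  by (simp add: funpow_add)

lemma D_leib: "D (Suc m) ([:0,1:] * f) = [:0,1:] * D (Suc m) f + smult (real (Suc m)) (D m f)"
proof (induction m)
  case 0 then show ?case by (simp add: pderiv_mult pderiv_pCons)
next
  case (Suc m)
  have "D (Suc (Suc m)) ([:0,1:] * f) = pderiv (D (Suc m) ([:0,1:] * f))" by simp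
  also have "\<dots> = pderiv ([:0,1:] * D (Suc m) f + smult (real (Suc m)) (D m f))" using Suc by simp
  also have "\<dots> = [:0,1:] * D (Suc (Suc m)) f + smult (real (Suc (Suc m))) (D (Suc m) f)"
    by (simp add: pderiv_add pderiv_mult pderiv_smult pderiv_pCons algebra_simps smult_add_left numeral_mult_conv_smult)
  finally show ?case .
qed

definition uu :: "nat \<Rightarrow> real poly" where "uu k = [:-1,0,1:] ^ k"
definition Qp :: "nat \<Rightarrow> nat \<Rightarrow> real poly" where "Qp k m = D m (legendre k)"

lemma smult_cancel: "(c::real) \<noteq> 0 \<Longrightarrow> smult c a = smult c b \<Longrightarrow> a = b"
proof -
  assume c: "c \<noteq> 0" and h: "smult c a = smult c b"
  have "smult (inverse c) (smult c a) = smult (inverse c) (smult c b)" using h by simp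
  then show "a = b" using c by (simp add: smult_smult)
qed

lemma cst_pos: "(2::real) ^ k * fact k \<noteq> 0" by simp

lemma Du: "D (k + j) (uu k) = smult (2 ^ k * fact k) (Qp k j)"
proof -
  have "legendre k = smult (1 / (2 ^ k * fact k)) (D k (uu k))"
    by (simp add: legendre_def uu_def)
  then have "D k (uu k) = smult (2 ^ k * fact k) (legendre k)"
    by (simp add: smult_smult)
  then have "D j (D k (uu k)) = smult (2 ^ k * fact k) (Qp k j)" by (simp add: Qp_def D_smult)
  then show ?thesis by (simp add: D_comp add.commute)
qed

lemma pderiv_uu: "pderiv (uu (Suc k)) = smult (2 * real (Suc k)) ([:0,1:] * uu k)"
  unfolding uu_def pderiv_power_Suc
  by (simp add: pderiv_pCons algebra_simps smult_add_left mult.commute)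

lemma uu_Suc: "uu (Suc k) = [:-1,0,1:] * uu k" by (simp add: uu_def)

lemma F1p: "Qp (Suc k) 1 = smult (real (Suc k)) (Qp k 0) + [:0,1:] * Qp k 1"
proof -
  have "D (Suc k + 1) (uu (Suc k)) = D (Suc k) (pderiv (uu (Suc k)))"
    by (metis D_Suc Suc_eq_plus1)
  also have "\<dots> = smult (2 * real (Suc k)) ([:0,1:] * D (Suc k) (uu k) + smult (real (Suc k)) (D k (uu k)))"
    by (simp only: pderiv_uu D_smult D_leib)
  finally have "smult (2 ^ Suc k * fact (Suc k)) (Qp (Suc k) 1) =
     smult (2 * real (Suc k)) ([:0,1:] * smult (2 ^ k * fact k) (Qp k 1) + smult (real (Suc k)) (smult (2 ^ k * fact k) (Qp k 0)))"
    using Du[of "Suc k" 1] Du[of k 1] Du[of k 0] by simp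
  then have "smult (2 ^ Suc k * fact (Suc k)) (Qp (Suc k) 1) =
     smult (2 ^ Suc k * fact (Suc k)) ([:0,1:] * Qp k 1 + smult (real (Suc k)) (Qp k 0))"
    by (simp add: smult_add_right smult_smult mult_smult_right algebra_simps)
  then have "Qp (Suc k) 1 = [:0,1:] * Qp k 1 + smult (real (Suc k)) (Qp k 0)"
    by (rule smult_cancel[rotated]) simp
  then show ?thesis by (simp add: add.commute)
qed

lemma pderiv2_uu: "pderiv (pderiv (uu (Suc (Suc k)))) =
   smult (2 * real (Suc (Suc k))) (smult (2 * real k + 3) (uu (Suc k)) + smult (2 * real (Suc k)) (uu k))"
proof -
  have X2: "[:0,1:] * ([:0,1:] * uu k) = uu (Suc k) + uu k"
    by (simp add: uu_Suc algebra_simps)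
  have "pderiv (pderiv (uu (Suc (Suc k)))) = smult (2 * real (Suc (Suc k))) (pderiv ([:0,1:] * uu (Suc k)))"
    by (simp only: pderiv_uu pderiv_smult)
  also have "pderiv ([:0,1:] * uu (Suc k)) = uu (Suc k) + [:0,1:] * pderiv (uu (Suc k))"
    by (simp add: pderiv_mult pderiv_pCons)
  also have "\<dots> = uu (Suc k) + smult (2 * real (Suc k)) ([:0,1:] * ([:0,1:] * uu k))"
    by (simp only: pderiv_uu mult_smult_right)
  also have "\<dots> = smult (2 * real k + 3) (uu (Suc k)) + smult (2 * real (Suc k)) (uu k)"
    by (simp only: X2) (simp add: poly_eq_iff algebra_simps)
  finally show ?thesis .
qed

lemma F2p: "Qp (Suc (Suc k)) 1 = smult (2 * real k + 3) (Qp (Suc k) 0) + Qp k 1"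
proof -
  have a1: "D (Suc k) (uu (Suc k)) = smult (2 ^ Suc k * fact (Suc k)) (Qp (Suc k) 0)"
    using Du[of "Suc k" 0] by simp
  have a2: "D (Suc k) (uu k) = smult (2 ^ k * fact k) (Qp k 1)"
    using Du[of k 1] by simp
  have "D (Suc (Suc k) + 1) (uu (Suc (Suc k))) = D (Suc k) (pderiv (pderiv (uu (Suc (Suc k)))))"
    by (metis D_Suc Suc_eq_plus1)
  also have "\<dots> = smult (2 * real (Suc (Suc k))) (smult (2 * real k + 3) (D (Suc k) (uu (Suc k))) + smult (2 * real (Suc k)) (D (Suc k) (uu k)))"
    unfolding pderiv2_uu by (simp only: D_smult D_add)
  finally have "smult (2 ^ Suc (Suc k) * fact (Suc (Suc k))) (Qp (Suc (Suc k)) 1) =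
     smult (2 * real (Suc (Suc k))) (smult (2 * real k + 3) (smult (2 ^ Suc k * fact (Suc k)) (Qp (Suc k) 0)) + smult (2 * real (Suc k)) (smult (2 ^ k * fact k) (Qp k 1)))"
    using Du[of "Suc (Suc k)" 1] a1 a2 by (simp only:)
  then have "smult (2 ^ Suc (Suc k) * fact (Suc (Suc k))) (Qp (Suc (Suc k)) 1) =
     smult (2 ^ Suc (Suc k) * fact (Suc (Suc k))) (smult (2 * real k + 3) (Qp (Suc k) 0) + Qp k 1)"
    by (simp add: smult_add_right smult_smult algebra_simps)
  then show ?thesis by (rule smult_cancel[rotated]) simp
qed

lemma Qp_Suc: "Qp k (Suc m) = pderiv (Qp k m)" by (simp add: Qp_def)

lemma F1m: "Qp (Suc k) (Suc m) = smult (real (Suc k + m)) (Qp k m) + [:0,1:] * Qp k (Suc m)"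
proof (induction m)
  case 0 then show ?case using F1p by simp
next
  case (Suc m)
  have "Qp (Suc k) (Suc (Suc m)) = pderiv (Qp (Suc k) (Suc m))" by (rule Qp_Suc)
  also have "\<dots> = smult (real (Suc k + m)) (Qp k (Suc m)) + Qp k (Suc m) + [:0,1:] * Qp k (Suc (Suc m))"
    by (simp only: Suc pderiv_add pderiv_smult pderiv_mult Qp_Suc[symmetric]) (simp add: pderiv_pCons)
  also have "\<dots> = smult (real (Suc k + Suc m)) (Qp k (Suc m)) + [:0,1:] * Qp k (Suc (Suc m))"
    by (simp add: poly_eq_iff algebra_simps)
  finally show ?case .
qed

lemma F2m: "Qp (Suc (Suc k)) (Suc m) = smult (2 * real k + 3) (Qp (Suc k) m) + Qp k (Suc m)"
proof -
  have "D m (Qp (Suc (Suc k)) 1) = D m (smult (2 * real k + 3) (Qp (Suc k) 0) + Qp k 1)" using F2p by simp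
  then show ?thesis by (simp add: D_add D_smult Qp_def D_comp funpow_swap1)
qed

definition q :: "nat \<Rightarrow> nat \<Rightarrow> real \<Rightarrow> real" where "q k m t = poly (Qp k m) t"

lemma F1e: "q (Suc k) (Suc m) t = (real k + 1 + real m) * q k m t + t * q k (Suc m) t"
  unfolding q_def by (subst F1m) simp
lemma F2e: "q (Suc (Suc k)) (Suc m) t = (2 * real k + 3) * q (Suc k) m t + q k (Suc m) t"
  unfolding q_def by (subst F2m) simp
lemma F5e: "t * q (Suc k) (Suc m) t - q k (Suc m) t = (real k + 1 - real m) * q (Suc k) m t"
  using F2e[of k m t] F1e[of "Suc k" m t] by (simp add: algebra_simps)
lemma Ae: "(1 - t\<^sup>2) * q (Suc k) (Suc m) t + (real k + 1 - real m) * t * q (Suc k) m t = (real k + 1 + real m) * q k m t"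
proof -
  have "t * (t * q (Suc k) (Suc m) t - q k (Suc m) t) = t * ((real k + 1 - real m) * q (Suc k) m t)"
    using F5e[of t k m] by simp
  then show ?thesis using F1e[of k m t] by (simp add: algebra_simps power2_eq_square)
qed
lemma F3e: "(real k + 2 - real m) * q (Suc (Suc k)) m t = (2 * real k + 3) * t * q (Suc k) m t - (real k + 1 + real m) * q k m t"
  using F5e[of t "Suc k" m] F1e[of "Suc k" m t] Ae[of t k m]
  by (simp add: algebra_simps power2_eq_square)

lemma D_zero: "degree p < m \<Longrightarrow> D m p = 0"
proof (induction m arbitrary: p)
  case 0 then show ?case by simp
next
  case (Suc m)
  show ?case
  proof (cases m)
    case 0 then show ?thesis using Suc.prems by (simp add: pderiv_eq_0_iff)
  next
    case (Suc j)
    have "degree (pderiv p) < m" using Suc.prems by (simp add: degree_pderiv Suc)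
    then show ?thesis by (simp add: D_Suc Suc.IH del: funpow.simps)
  qed
qed

lemma degree_D: "degree (D m p) \<le> degree p - m"
  by (induction m) (auto simp: degree_pderiv)

lemma degree_legendre: "degree (legendre k) \<le> k"
proof -
  have "degree (uu k) \<le> 2 * k" unfolding uu_def
    by (rule order.trans[OF degree_power_le]) simp
  then have "degree (D k (uu k)) \<le> k" using degree_D[of k "uu k"] by linarith
  then show ?thesis by (simp add: legendre_def uu_def)
qed

lemma Qp_zero: "k < m \<Longrightarrow> Qp k m = 0"
  unfolding Qp_def using degree_legendre by (intro D_zero) (meson le_less_trans)

lemma q_zero: "k < m \<Longrightarrow> q k m t = 0"
  by (simp add: q_def Qp_zero)

lemma legendre0: "legendre 0 = 1" by (simp add: legendre_def)

lemma q_diag: "q l l t = fact (2 * l) / (2 ^ l * fact l)"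
proof (induction l)
  case 0 then show ?case by (simp add: q_def Qp_def legendre0)
next
  case (Suc l)
  have "q (Suc l) (Suc l) t = (2 * real l + 1) * q l l t"
    using F1e[of l l t] q_zero[of l "Suc l" t] by simp
  also have "\<dots> = fact (2 * Suc l) / (2 ^ Suc l * fact (Suc l))"
  proof -
    have e: "fact (2 * Suc l) = (2 * real l + 2) * (2 * real l + 1) * (fact (2 * l) :: real)"
      by (simp add: algebra_simps)
    have f: "fact (Suc l) = (real l + 1) * (fact l :: real)" by simp
    have p: "(2::real) ^ Suc l = 2 * 2 ^ l" by simp
    have nz: "real l + 1 \<noteq> 0" by linarith
    have g: "(2 * real l + 2) * (2 * real l + 1) * fact (2 * l) / (2 * 2 ^ l * ((real l + 1) * fact l))
       = (2 * real l + 1) * (fact (2 * l) / (2 ^ l * fact l))"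
    proof -
      have gen: "\<And>a b c x y::real. a \<noteq> 0 \<Longrightarrow> b \<noteq> 0 \<Longrightarrow> c \<noteq> 0 \<Longrightarrow> (2 * a) * y * x / (2 * b * (a * c)) = y * (x / (b * c))"
        by (simp add: field_simps)
      have "2 * real l + 2 = 2 * (real l + 1)" by simp
      then show ?thesis using gen[OF nz, of "2 ^ l" "fact l" "fact (2*l)" "2 * real l + 1"] by (simp add: mult_ac)
    qed
    show ?thesis unfolding Suc e f p g ..
  qed
  finally show ?case .
qed




lemma assoc_eq: "assoc_legendre k m = (\<lambda>t. sqrt (1 - t\<^sup>2) ^ m * poly (Qp k m) t)"
  by (auto simp: assoc_legendre_def Qp_def)

lemma assoc_deriv: "1 - t\<^sup>2 > 0 \<Longrightarrow> ((\<lambda>t. sqrt (1 - t\<^sup>2) ^ m * poly (Qp k m) t) has_real_derivative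
   (real m * sqrt (1 - t\<^sup>2) ^ (m - 1) * (- t / sqrt (1 - t\<^sup>2))) * poly (Qp k m) t + sqrt (1 - t\<^sup>2) ^ m * poly (Qp k (Suc m)) t) (at t)"
  apply (rule derivative_eq_intros refl | simp)+
  apply (simp add: Qp_Suc divide_inverse mult_ac)
  done

lemma sin2_deriv:
  assumes "0 \<le> \<theta>" "\<theta> \<le> pi"
  shows "(sin \<theta>)\<^sup>2 * deriv (assoc_legendre k m) (cos \<theta>) =
     sin \<theta> ^ m * ((1 - (cos \<theta>)\<^sup>2) * q k (Suc m) (cos \<theta>) - real m * cos \<theta> * q k m (cos \<theta>))"
proof (cases "sin \<theta> = 0")
  case True
  then show ?thesis using sin_cos_squared_add[of \<theta>] by (cases m) simp_all
next
  case False
  have s0: "sin \<theta> > 0" using False assms sin_ge_zero[of \<theta>] by linarith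
  define t where "t = cos \<theta>"
  have st: "sqrt (1 - t\<^sup>2) = sin \<theta>" unfolding t_def
    using s0 by (simp add: sin_squared_eq[symmetric])
  have pos: "1 - t\<^sup>2 > 0" using s0 st by (metis real_sqrt_le_0_iff not_le)
  have "deriv (assoc_legendre k m) t = (real m * sqrt (1 - t\<^sup>2) ^ (m - 1) * (- t / sqrt (1 - t\<^sup>2))) * poly (Qp k m) t + sqrt (1 - t\<^sup>2) ^ m * poly (Qp k (Suc m)) t"
    unfolding assoc_eq by (rule DERIV_imp_deriv[OF assoc_deriv[OF pos]])
  then have d: "deriv (assoc_legendre k m) t = (real m * sin \<theta> ^ (m - 1) * (- t / sin \<theta>)) * q k m t + sin \<theta> ^ m * q k (Suc m) t"
    by (simp add: st q_def)
  have c2: "1 - t\<^sup>2 = (sin \<theta>)\<^sup>2" unfolding t_def by (simp add: sin_squared_eq)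
  show ?thesis unfolding t_def[symmetric] d c2
  proof (cases m)
    case 0 then show "(sin \<theta>)\<^sup>2 * (real m * sin \<theta> ^ (m - 1) * (- t / sin \<theta>) * q k m t + sin \<theta> ^ m * q k (Suc m) t) =
    sin \<theta> ^ m * ((sin \<theta>)\<^sup>2 * q k (Suc m) t - real m * t * q k m t)" by simp
  next
    case (Suc j) then show "(sin \<theta>)\<^sup>2 * (real m * sin \<theta> ^ (m - 1) * (- t / sin \<theta>) * q k m t + sin \<theta> ^ m * q k (Suc m) t) =
    sin \<theta> ^ m * ((sin \<theta>)\<^sup>2 * q k (Suc m) t - real m * t * q k m t)"
      using False by (simp add: field_simps power2_eq_square)
  qed
qed

lemma calA_eq:
  assumes "0 \<le> \<theta>" "\<theta> \<le> pi"
  shows "calA m n \<theta> = (1/2) * (real n + 1 + real m) * sin \<theta> ^ m * q n m (cos \<theta>)"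
proof -
  have s0: "sin \<theta> \<ge> 0" using assms sin_ge_zero by blast
  have st: "sqrt (1 - (cos \<theta>)\<^sup>2) = sin \<theta>"
    using s0 by (simp add: sin_squared_eq[symmetric])
  have a: "assoc_legendre (n+1) m (cos \<theta>) = sin \<theta> ^ m * q (Suc n) m (cos \<theta>)"
    by (simp add: assoc_eq st q_def)
  have "calA m n \<theta> = (1/2) * (sin \<theta> ^ m * ((1 - (cos \<theta>)\<^sup>2) * q (Suc n) (Suc m) (cos \<theta>) - real m * cos \<theta> * q (Suc n) m (cos \<theta>))
      + real (n + 1) * cos \<theta> * (sin \<theta> ^ m * q (Suc n) m (cos \<theta>)))"
    unfolding calA_def a sin2_deriv[OF assms] by simp
  also have "\<dots> = (1/2) * sin \<theta> ^ m * ((1 - (cos \<theta>)\<^sup>2) * q (Suc n) (Suc m) (cos \<theta>) + (real n + 1 - real m) * cos \<theta> * q (Suc n) m (cos \<theta>))"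
    by (simp add: algebra_simps)
  also have "\<dots> = (1/2) * (real n + 1 + real m) * sin \<theta> ^ m * q n m (cos \<theta>)"
    unfolding Ae by simp
  finally show ?thesis .
qed



definition E0 :: "nat \<Rightarrow> real \<Rightarrow> quat" where "E0 l \<phi> = Quat (cos (real l * \<phi>)) 0 0 (- sin (real l * \<phi>))"
definition E1 :: "nat \<Rightarrow> real \<Rightarrow> quat" where "E1 l \<phi> = Quat 0 (cos (real (l+1) * \<phi>)) (sin (real (l+1) * \<phi>)) 0"
definition uq :: "real \<Rightarrow> quat" where "uq \<phi> = Quat 0 (cos \<phi>) (sin \<phi>) 0"

lemmas quat_simps = times_quat_def plus_quat_def minus_quat_def uminus_quat_def scaleR_quat_def
  of_real_def one_quat_def zero_quat_def qe1_def qe2_def qe3_def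

lemma of_real_quat: "(of_real a :: quat) = Quat a 0 0 0"
  by (simp add: quat_simps)

lemma E0_eq: "of_real (cos (real l * \<phi>)) - sin (real l * \<phi>) *\<^sub>R qe3 = E0 l \<phi>"
  by (simp add: quat_simps E0_def)
lemma E1_eq: "cos (real (l + 1) * \<phi>) *\<^sub>R qe1 + sin (real (l + 1) * \<phi>) *\<^sub>R qe2 = E1 l \<phi>"
  by (simp add: quat_simps E1_def)

lemma mulE: "(of_real a + b *\<^sub>R uq \<phi>) * (p *\<^sub>R E0 l \<phi> + c *\<^sub>R E1 l \<phi>) =
   (a * p - b * c) *\<^sub>R E0 l \<phi> + (a * c + b * p) *\<^sub>R E1 l \<phi>"
proof -
  have s: "sin \<phi> ^ 2 + cos \<phi> ^ 2 = 1" by simp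
  show ?thesis
    apply (simp add: quat_simps E0_def E1_def uq_def distrib_right cos_add sin_add)
    using s by algebra
qed

lemma scal_comb: "of_real d * (p *\<^sub>R (E::'a::real_algebra_1) + c *\<^sub>R F) = (d * p) *\<^sub>R E + (d * c) *\<^sub>R F"
  by (simp add: of_real_def scaleR_add_right)

lemma pow_e3: "(of_real (\<rho> * cos \<phi>) - (\<rho> * sin \<phi>) *\<^sub>R qe3) ^ l = (\<rho> ^ l) *\<^sub>R E0 l \<phi>"
proof (induction l)
  case 0 then show ?case by (simp add: E0_def quat_simps)
next
  case (Suc l)
  show ?case unfolding power_Suc2 Suc
    by (simp add: quat_simps E0_def distrib_right cos_add sin_add algebra_simps)
qed




definition Al where "Al n l r \<theta> = 2 ^ l * fact n * r ^ n * sin \<theta> ^ l * q n l (cos \<theta>) / fact (n + l)"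
definition Bl where "Bl n l r \<theta> = 2 ^ l * fact n * r ^ n * sin \<theta> ^ (l + 1) * q n (l + 1) (cos \<theta>) / fact (n + l + 1)"

lemma fact2: "(fact (n + l + 2) :: real) = (real n + real l + 2) * (real n + real l + 1) * fact (n + l)"
  by (simp add: algebra_simps)

lemma An_form:
  assumes "0 \<le> \<theta>" "\<theta> \<le> pi"
  shows "An n l r \<theta> \<phi> = Al n l r \<theta> *\<^sub>R E0 l \<phi> + Bl n l r \<theta> *\<^sub>R E1 l \<phi>"
proof -
  define a where "a = real n + real l + 2"
  define b where "b = real n + real l + 1"
  have a0: "a > 0" and b0: "b > 0" unfolding a_def b_def by simp_all
  have ra: "real (n + l + 2) = a" and rb: "real n + 1 + real l = b" and rc: "real n + 1 + real (l + 1) = a"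
    unfolding a_def b_def by simp_all
  have f2: "(fact (n + l + 2) :: real) = a * b * fact (n + l)" unfolding a_def b_def fact2 ..
  have f3: "(fact (n + l + 2) :: real) = a * fact (n + l + 1)"
    unfolding a_def by (simp add: algebra_simps)
  have h1: "2 ^ (l + 1) * fact n * r ^ n / fact (n + l + 2) * (real (n + l + 2) * calA l n \<theta>) = Al n l r \<theta>"
    unfolding calA_eq[OF assms] Al_def f2 ra rb
    using a0 b0 by (simp add: field_simps)
  have h2: "2 ^ (l + 1) * fact n * r ^ n / fact (n + l + 2) * calA (l + 1) n \<theta> = Bl n l r \<theta>"
    unfolding calA_eq[OF assms] Bl_def f3 rc
    using a0 by (simp add: field_simps del: fact_Suc)
  show ?thesis unfolding An_def E0_eq E1_eq scaleR_add_right scaleR_scaleR h1 h2 ..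
qed




lemma coreA:
  fixes K L P F R S Q2 Q1 Q1' Q0 r s t G d1 d2 d3 d4 :: real
  assumes "d1 > 0" "d2 > 0" "d3 > 0" "d4 > 0" "G > 0"
    and ss: "s\<^sup>2 = 1 - t\<^sup>2"
    and R1: "d3 * d4 * Q2 = (2*K+4) * d2 * t * Q1 - (1 - t\<^sup>2) * Q1' - d2 * d1 * Q0"
  shows "P * ((K+2)*(K+1)*F) * (r\<^sup>2*R) * S * Q2 / (d2 * d1 * G) =
    (K+2) / (2 * d3 * d4) * (((4*K+8) * r * t) * (P*((K+1)*F)*(r*R)*S*Q1/(d1*G))
      - (2 * r * s) * (P*((K+1)*F)*(r*R)*(s*S)*Q1'/(d2*d1*G)) - 2*(K+1)*r\<^sup>2 * (P*F*R*S*Q0/G))"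
proof -
  define X where "X = P * F * R * S / G"
  have Q2: "Q2 = ((2*K+4) * d2 * t * Q1 - s\<^sup>2 * Q1' - d2 * d1 * Q0) / (d3 * d4)"
  proof -
    have R1': "d3 * d4 * Q2 = (2*K+4) * d2 * t * Q1 - s\<^sup>2 * Q1' - d2 * d1 * Q0"
      using R1 ss by simp
    show ?thesis using assms(3,4) by (simp add: R1'[symmetric])
  qed
  have L: "P * ((K+2)*(K+1)*F) * (r\<^sup>2*R) * S * Q2 / (d2 * d1 * G) = X * r\<^sup>2 * (K+1) * ((K+2) * Q2 / (d2 * d1))"
    unfolding X_def using assms(1-5) by (simp add: field_simps)
  have RR: "(K+2) / (2 * d3 * d4) * (((4*K+8) * r * t) * (P*((K+1)*F)*(r*R)*S*Q1/(d1*G))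
      - (2 * r * s) * (P*((K+1)*F)*(r*R)*(s*S)*Q1'/(d2*d1*G)) - 2*(K+1)*r\<^sup>2 * (P*F*R*S*Q0/G))
    = X * r\<^sup>2 * (K+1) * ((K+2) / (2 * d3 * d4) * ((4*K+8) * t * Q1 / d1 - 2 * s\<^sup>2 * Q1' / (d2 * d1) - 2 * Q0))"
    unfolding X_def using assms(1-5) by (simp add: field_simps power2_eq_square)
  have C: "(K+2) * Q2 / (d2 * d1) = (K+2) / (2 * d3 * d4) * ((4*K+8) * t * Q1 / d1 - 2 * s\<^sup>2 * Q1' / (d2 * d1) - 2 * Q0)"
    unfolding Q2 using assms(1-5) by (simp add: field_simps)
  show ?thesis unfolding L RR C ..
qed




lemma coreB:
  fixes K L P F R S Q2 Q1 Q1' Q0 r s t G d1 d2 d3 d4 :: real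
  assumes "d1 > 0" "d2 > 0" "d3 > 0" "d4 > 0" "G > 0"
    and R2: "d3 * Q2 = (2*K+4) * t * Q1' + d2 * Q1 - d2 * Q0"
  shows "P * ((K+2)*(K+1)*F) * (r\<^sup>2*R) * (s*S) * Q2 / (d4 * d2 * d1 * G) =
    (K+2) / (2 * d3 * d4) * (((4*K+8) * r * t) * (P*((K+1)*F)*(r*R)*(s*S)*Q1'/(d2*d1*G))
      + (2 * r * s) * (P*((K+1)*F)*(r*R)*S*Q1/(d1*G)) - 2*(K+1)*r\<^sup>2 * (P*F*R*(s*S)*Q0/(d1*G)))"
proof -
  define X where "X = P * F * R * S / G"
  have Q2: "Q2 = ((2*K+4) * t * Q1' + d2 * Q1 - d2 * Q0) / d3"
    using assms(3) by (simp add: R2[symmetric])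
  have L: "P * ((K+2)*(K+1)*F) * (r\<^sup>2*R) * (s*S) * Q2 / (d4 * d2 * d1 * G) = X * s * r\<^sup>2 * (K+1) * ((K+2) * Q2 / (d4 * d2 * d1))"
    unfolding X_def using assms(1-5) by (simp add: field_simps)
  have RR: "(K+2) / (2 * d3 * d4) * (((4*K+8) * r * t) * (P*((K+1)*F)*(r*R)*(s*S)*Q1'/(d2*d1*G))
      + (2 * r * s) * (P*((K+1)*F)*(r*R)*S*Q1/(d1*G)) - 2*(K+1)*r\<^sup>2 * (P*F*R*(s*S)*Q0/(d1*G)))
    = X * s * r\<^sup>2 * (K+1) * ((K+2) / (2 * d3 * d4) * ((4*K+8) * t * Q1' / (d2 * d1) + 2 * Q1 / d1 - 2 * Q0 / d1))"
    unfolding X_def using assms(1-5) by (simp add: field_simps power2_eq_square)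
  have C: "(K+2) * Q2 / (d4 * d2 * d1) = (K+2) / (2 * d3 * d4) * ((4*K+8) * t * Q1' / (d2 * d1) + 2 * Q1 / d1 - 2 * Q0 / d1)"
    unfolding Q2 using assms(1-5) by (simp add: field_simps)
  show ?thesis unfolding L RR C ..
qed

lemma R1e: "(real k - real l + 2) * (real k + real l + 3) * q (Suc (Suc k)) l t =
   (2 * real k + 4) * (real k + real l + 2) * t * q (Suc k) l t - (1 - t\<^sup>2) * q (Suc k) (Suc l) t
   - (real k + real l + 2) * (real k + real l + 1) * q k l t"
proof -
  have a: "(1 - t\<^sup>2) * q (Suc k) (Suc l) t = (real k + 1 + real l) * q k l t - (real k + 1 - real l) * t * q (Suc k) l t"
    using Ae[of t k l] by simp
  have b: "(real k + 2 - real l) * q (Suc (Suc k)) l t = (2 * real k + 3) * t * q (Suc k) l t - (real k + 1 + real l) * q k l t"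
    by (rule F3e)
  have "(real k - real l + 2) * (real k + real l + 3) * q (Suc (Suc k)) l t = (real k + real l + 3) * ((real k + 2 - real l) * q (Suc (Suc k)) l t)"
    by (simp add: algebra_simps)
  also have "\<dots> = (real k + real l + 3) * ((2 * real k + 3) * t * q (Suc k) l t - (real k + 1 + real l) * q k l t)"
    unfolding b ..
  also have "\<dots> = (2 * real k + 4) * (real k + real l + 2) * t * q (Suc k) l t - ((real k + 1 + real l) * q k l t - (real k + 1 - real l) * t * q (Suc k) l t)
   - (real k + real l + 2) * (real k + real l + 1) * q k l t"
    by (simp add: algebra_simps)
  finally show ?thesis unfolding a .
qed

lemma R2e: "(real k - real l + 2) * q (Suc (Suc k)) (Suc l) t =
   (2 * real k + 4) * t * q (Suc k) (Suc l) t + (real k + real l + 2) * q (Suc k) l t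
   - (real k + real l + 2) * q k (Suc l) t"
proof -
  have b: "(real k + 2 - real (Suc l)) * q (Suc (Suc k)) (Suc l) t = (2 * real k + 3) * t * q (Suc k) (Suc l) t - (real k + 1 + real (Suc l)) * q k (Suc l) t"
    by (rule F3e)
  have c: "q (Suc (Suc k)) (Suc l) t = (real (Suc k) + 1 + real l) * q (Suc k) l t + t * q (Suc k) (Suc l) t"
    using F1e[of "Suc k" l t] by simp
  show ?thesis using b c by (simp add: algebra_simps)
qed




lemma recAB:
  assumes "l \<le> k"
  shows "Al (Suc (Suc k)) l r \<theta> = real (k+2) / (2 * real (Suc k - l + 1) * real (Suc k + l + 2)) *
      (((4 * real k + 8) * r * cos \<theta>) * Al (Suc k) l r \<theta> - (2 * r * sin \<theta>) * Bl (Suc k) l r \<theta> - 2 * (real k + 1) * r\<^sup>2 * Al k l r \<theta>)"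
   and "Bl (Suc (Suc k)) l r \<theta> = real (k+2) / (2 * real (Suc k - l + 1) * real (Suc k + l + 2)) *
      (((4 * real k + 8) * r * cos \<theta>) * Bl (Suc k) l r \<theta> + (2 * r * sin \<theta>) * Al (Suc k) l r \<theta> - 2 * (real k + 1) * r\<^sup>2 * Bl k l r \<theta>)"
proof -
  define K where "K = real k"
  define L where "L = real l"
  define G :: real where "G = fact (k + l)"
  define d1 where "d1 = K + L + 1"
  define d2 where "d2 = K + L + 2"
  define d3 where "d3 = real (Suc k - l + 1)"
  define d4 where "d4 = real (Suc k + l + 2)"
  have d3': "d3 = K - L + 2" unfolding d3_def K_def L_def using assms by (simp add: of_nat_diff)
  have d4': "d4 = K + L + 3" unfolding d4_def K_def L_def by simp
  have pos: "d1 > 0" "d2 > 0" "d3 > 0" "d4 > 0" "G > 0"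
    unfolding d1_def d2_def d3_def d4_def G_def K_def L_def by simp_all
  have e1: "(fact (Suc (Suc k)) :: real) = (K+2)*(K+1)*fact k" unfolding K_def by (simp add: algebra_simps)
  have e2: "(fact (Suc k) :: real) = (K+1)*fact k" unfolding K_def by (simp add: algebra_simps)
  have e3: "r ^ Suc (Suc k) = r\<^sup>2 * r ^ k" by (simp add: power2_eq_square)
  have e4: "r ^ Suc k = r * r ^ k" by simp
  have e5: "(fact (Suc (Suc k) + l) :: real) = d2 * d1 * G"
    unfolding d1_def d2_def G_def K_def L_def by (simp add: algebra_simps)
  have e6: "(fact (Suc k + l) :: real) = d1 * G"
    unfolding d1_def G_def K_def L_def by (simp add: algebra_simps)
  have e7: "(fact (Suc k + l + 1) :: real) = d2 * d1 * G"
    unfolding d1_def d2_def G_def K_def L_def by (simp add: algebra_simps)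
  have e8: "(fact (k + l + 1) :: real) = d1 * G"
    unfolding d1_def G_def K_def L_def by (simp add: algebra_simps)
  have e9: "(fact (Suc (Suc k) + l + 1) :: real) = d4 * d2 * d1 * G"
    unfolding d1_def d2_def d4' G_def K_def L_def by (simp add: algebra_simps)
  have e10: "sin \<theta> ^ (l + 1) = sin \<theta> * sin \<theta> ^ l" by simp
  have e11: "real (k + 2) = K + 2" unfolding K_def by simp
  have e12: "4 * real k + 8 = 4 * K + 8" "real k + 1 = K + 1" unfolding K_def by simp_all
  have ss: "(sin \<theta>)\<^sup>2 = 1 - (cos \<theta>)\<^sup>2" by (simp add: sin_squared_eq)
  have R1: "d3 * d4 * q (Suc (Suc k)) l (cos \<theta>) = (2*K+4) * d2 * cos \<theta> * q (Suc k) l (cos \<theta>) - (1 - (cos \<theta>)\<^sup>2) * q (Suc k) (l + 1) (cos \<theta>) - d2 * d1 * q k l (cos \<theta>)"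
    unfolding d3' d4' d1_def d2_def K_def L_def using R1e[of k l "cos \<theta>"] by simp
  have R2: "d3 * q (Suc (Suc k)) (l + 1) (cos \<theta>) = (2*K+4) * cos \<theta> * q (Suc k) (l + 1) (cos \<theta>) + d2 * q (Suc k) l (cos \<theta>) - d2 * q k (l + 1) (cos \<theta>)"
    unfolding d3' d2_def K_def L_def using R2e[of k l "cos \<theta>"] by simp
  show "Al (Suc (Suc k)) l r \<theta> = real (k+2) / (2 * real (Suc k - l + 1) * real (Suc k + l + 2)) *
      (((4 * real k + 8) * r * cos \<theta>) * Al (Suc k) l r \<theta> - (2 * r * sin \<theta>) * Bl (Suc k) l r \<theta> - 2 * (real k + 1) * r\<^sup>2 * Al k l r \<theta>)"
    unfolding Al_def Bl_def e1 e2 e3 e4 e5 e6 e7 e8 e10 e11 e12 d3_def[symmetric] d4_def[symmetric] G_def[symmetric]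
    by (rule coreA[OF pos ss R1])
  show "Bl (Suc (Suc k)) l r \<theta> = real (k+2) / (2 * real (Suc k - l + 1) * real (Suc k + l + 2)) *
      (((4 * real k + 8) * r * cos \<theta>) * Bl (Suc k) l r \<theta> + (2 * r * sin \<theta>) * Al (Suc k) l r \<theta> - 2 * (real k + 1) * r\<^sup>2 * Bl k l r \<theta>)"
    unfolding Al_def Bl_def e1 e2 e3 e4 e5 e6 e7 e8 e9 e10 e11 e12 d3_def[symmetric] d4_def[symmetric] G_def[symmetric]
    by (rule coreB[OF pos R2])
qed



lemma q_sub: "q (Suc l) l t = (2 * real l + 1) * t * q l l t"
proof (cases l)
  case 0
  have "legendre 1 = [:0, 1:]"
    by (simp add: legendre_def pderiv_pCons)
  then show ?thesis using 0 by (simp add: q_def Qp_def legendre0)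
next
  case (Suc j)
  have "(real j + 2 - real (Suc j)) * q (Suc (Suc j)) (Suc j) t = (2 * real j + 3) * t * q (Suc j) (Suc j) t - (real j + 1 + real (Suc j)) * q j (Suc j) t"
    by (rule F3e)
  then show ?thesis using Suc q_zero[of j "Suc j" t] by simp
qed

lemma q_dd: "q (Suc l) (Suc l) t = (2 * real l + 1) * q l l t"
  using F1e[of l l t] q_zero[of l "Suc l" t] by simp
lemma Bl_diag: "Bl l l r \<theta> = 0"
  by (simp add: Bl_def q_zero)

lemma q_diag': "q l l t = fact (l + l) / (2 ^ l * fact l)"
proof -
  have "(fact (2 * l) :: real) = fact (l + l)" by (simp only: mult_2)
  then show ?thesis using q_diag[of l t] by simp
qed

lemma Al_diag: "Al l l r \<theta> = r ^ l * sin \<theta> ^ l"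
  unfolding Al_def q_diag' by simp

lemma diagAB:
  shows "Al (Suc l) l r \<theta> = 1/4 * (((4 * real l + 4) * r * cos \<theta>) * Al l l r \<theta> - (2 * r * sin \<theta>) * Bl l l r \<theta>)"
   and "Bl (Suc l) l r \<theta> = 1/4 * (((4 * real l + 4) * r * cos \<theta>) * Bl l l r \<theta> + (2 * r * sin \<theta>) * Al l l r \<theta>)"
proof -
  define G :: real where "G = fact (l + l)"
  have G0: "G > 0" unfolding G_def by simp
  have f1: "(fact (Suc l + l) :: real) = (2 * real l + 1) * G" unfolding G_def
    by simp
  have f2: "(fact (Suc l + l + 1) :: real) = (2 * real l + 2) * ((2 * real l + 1) * G)" unfolding G_def
    by (simp add: algebra_simps)
  have p: "1 + 2 * real l > 0" "real l + 1 > 0" by simp_all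
  have qd: "q l l (cos \<theta>) = G / (2 ^ l * fact l)" unfolding G_def by (rule q_diag')
  have qs: "q (Suc l) l (cos \<theta>) = (2 * real l + 1) * cos \<theta> * (G / (2 ^ l * fact l))"
    using q_sub[of l "cos \<theta>"] qd by simp
  have qq: "q (Suc l) (l+1) (cos \<theta>) = (2 * real l + 1) * (G / (2 ^ l * fact l))"
    using q_dd[of l "cos \<theta>"] qd by simp
  define a where "a = 2 * real l + 1"
  define b where "b = real l + 1"
  define F :: real where "F = fact l"
  have a0: "a > 0" and b0: "b > 0" and F0: "F > 0" unfolding a_def b_def F_def by simp_all
  have fs: "(fact (Suc l) :: real) = b * F" unfolding b_def F_def by simp
  have c4: "4 * real l + 4 = 4 * b" unfolding b_def by simp
  have ps: "r ^ Suc l = r * r ^ l" "sin \<theta> ^ (l + 1) = sin \<theta> * sin \<theta> ^ l" by simp_all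
  have f1': "(fact (Suc l + l) :: real) = a * G" unfolding a_def by (rule f1)
  have f2': "(fact (Suc l + l + 1) :: real) = (2 * b) * (a * G)" unfolding a_def b_def f2 by simp
  show "Al (Suc l) l r \<theta> = 1/4 * (((4 * real l + 4) * r * cos \<theta>) * Al l l r \<theta> - (2 * r * sin \<theta>) * Bl l l r \<theta>)"
    unfolding Bl_diag Al_diag c4 unfolding Al_def f1' qs[folded a_def F_def] fs ps using G0 a0 b0 F0 by (simp add: field_simps)
  show "Bl (Suc l) l r \<theta> = 1/4 * (((4 * real l + 4) * r * cos \<theta>) * Bl l l r \<theta> + (2 * r * sin \<theta>) * Al l l r \<theta>)"
    unfolding Bl_diag Al_diag c4 unfolding Bl_def f2' qq[folded a_def F_def] fs ps using G0 a0 b0 F0 by (simp add: field_simps)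
qed



lemma comb: "of_real c1 * vecq (r * cos \<theta>) (r * sin \<theta> * cos \<phi>) (r * sin \<theta> * sin \<phi>)
   + of_real c2 * vecq_cnj (r * cos \<theta>) (r * sin \<theta> * cos \<phi>) (r * sin \<theta> * sin \<phi>)
   = of_real ((c1 + c2) * (r * cos \<theta>)) + ((c1 - c2) * (r * sin \<theta>)) *\<^sub>R uq \<phi>"
  by (simp add: quat_simps vecq_def vecq_cnj_def uq_def algebra_simps)

lemma xxc: "vecq (r * cos \<theta>) (r * sin \<theta> * cos \<phi>) (r * sin \<theta> * sin \<phi>)
   * vecq_cnj (r * cos \<theta>) (r * sin \<theta> * cos \<phi>) (r * sin \<theta> * sin \<phi>) = of_real (r\<^sup>2)"
proof -
  have a: "sin \<theta> ^ 2 + cos \<theta> ^ 2 = 1" and b: "sin \<phi> ^ 2 + cos \<phi> ^ 2 = 1" by simp_all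
  show ?thesis
    apply (simp add: quat_simps vecq_def vecq_cnj_def)
    using a b by algebra
qed

lemma fin: "(C::real) *\<^sub>R ((p1 *\<^sub>R E + u1 *\<^sub>R F) - (p2 *\<^sub>R E + u2 *\<^sub>R F)) = (C * (p1 - p2)) *\<^sub>R E + (C * (u1 - u2)) *\<^sub>R (F :: 'a :: real_vector)"
  by (simp add: algebra_simps)

theorem mainTheorem3:
  fixes r \<theta> \<phi> :: real
  assumes "r \<ge> 0" and "0 \<le> \<theta>" and "\<theta> \<le> pi"
  defines "x \<equiv> vecq (r * cos \<theta>) (r * sin \<theta> * cos \<phi>) (r * sin \<theta> * sin \<phi>)"
      and "xc \<equiv> vecq_cnj (r * cos \<theta>) (r * sin \<theta> * cos \<phi>) (r * sin \<theta> * sin \<phi>)"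
  shows "(\<forall>n l. 1 \<le> n \<longrightarrow> l \<le> n - 1 \<longrightarrow>
            An (n + 1) l r \<theta> \<phi> =
              (real (n + 1) / (2 * real (n - l + 1) * real (n + l + 2))) *\<^sub>R
                ((of_real (real (2 * n + 3)) * x + of_real (real (2 * n + 1)) * xc) * An n l r \<theta> \<phi>
                 - of_real (real (2 * n)) * x * xc * An (n - 1) l r \<theta> \<phi>))
       \<and> (\<forall>l. An (l + 1) l r \<theta> \<phi> =
              (1/4) *\<^sub>R ((of_real (real (2 * l + 3)) * x + of_real (real (2 * l + 1)) * xc) * An l l r \<theta> \<phi>))
       \<and> (\<forall>l. An l l r \<theta> \<phi> = (of_real (r * sin \<theta> * cos \<phi>) - (r * sin \<theta> * sin \<phi>) *\<^sub>R qe3) ^ l)"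
proof (intro conjI allI impI)
  note AF = An_form[OF assms(2,3)]
  fix n l :: nat
  assume n1: "1 \<le> n" and ln: "l \<le> n - 1"
  obtain k where nk: "n = Suc k" using n1 by (cases n) auto
  have lk: "l \<le> k" using ln nk by simp
  define C where "C = real (n + 1) / (2 * real (n - l + 1) * real (n + l + 2))"
  define a where "a = (real (2 * n + 3) + real (2 * n + 1)) * (r * cos \<theta>)"
  define b where "b = (real (2 * n + 3) - real (2 * n + 1)) * (r * sin \<theta>)"
  have cx: "of_real (real (2 * n + 3)) * x + of_real (real (2 * n + 1)) * xc = of_real a + b *\<^sub>R uq \<phi>"
    unfolding x_def xc_def a_def b_def by (rule comb)
  have xx: "of_real (real (2 * n)) * x * xc = (of_real (real (2 * n) * r\<^sup>2) :: quat)"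
  proof -
    have "x * xc = of_real (r\<^sup>2)" unfolding x_def xc_def by (rule xxc)
    then show ?thesis by (simp add: mult.assoc del: of_real_power)
  qed
  have "(real (n + 1) / (2 * real (n - l + 1) * real (n + l + 2))) *\<^sub>R
                ((of_real (real (2 * n + 3)) * x + of_real (real (2 * n + 1)) * xc) * An n l r \<theta> \<phi>
                 - of_real (real (2 * n)) * x * xc * An (n - 1) l r \<theta> \<phi>)
     = (C * ((a * Al n l r \<theta> - b * Bl n l r \<theta>) - real (2 * n) * r\<^sup>2 * Al (n - 1) l r \<theta>)) *\<^sub>R E0 l \<phi>
       + (C * ((a * Bl n l r \<theta> + b * Al n l r \<theta>) - real (2 * n) * r\<^sup>2 * Bl (n - 1) l r \<theta>)) *\<^sub>R E1 l \<phi>"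
    unfolding cx xx AF mulE scal_comb C_def[symmetric] by (rule fin)
  also have "\<dots> = An (n + 1) l r \<theta> \<phi>"
    unfolding AF
  proof -
    have A: "Al (n + 1) l r \<theta> = C * ((a * Al n l r \<theta> - b * Bl n l r \<theta>) - real (2 * n) * r\<^sup>2 * Al (n - 1) l r \<theta>)"
      using recAB(1)[OF lk, of r \<theta>] unfolding C_def a_def b_def nk by (simp add: algebra_simps)
    have B: "Bl (n + 1) l r \<theta> = C * ((a * Bl n l r \<theta> + b * Al n l r \<theta>) - real (2 * n) * r\<^sup>2 * Bl (n - 1) l r \<theta>)"
      using recAB(2)[OF lk, of r \<theta>] unfolding C_def a_def b_def nk by (simp add: algebra_simps)
    show "(C * ((a * Al n l r \<theta> - b * Bl n l r \<theta>) - real (2 * n) * r\<^sup>2 * Al (n - 1) l r \<theta>)) *\<^sub>R E0 l \<phi>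
       + (C * ((a * Bl n l r \<theta> + b * Al n l r \<theta>) - real (2 * n) * r\<^sup>2 * Bl (n - 1) l r \<theta>)) *\<^sub>R E1 l \<phi>
       = Al (n + 1) l r \<theta> *\<^sub>R E0 l \<phi> + Bl (n + 1) l r \<theta> *\<^sub>R E1 l \<phi>"
      unfolding A B ..
  qed
  finally show "An (n + 1) l r \<theta> \<phi> =
              (real (n + 1) / (2 * real (n - l + 1) * real (n + l + 2))) *\<^sub>R
                ((of_real (real (2 * n + 3)) * x + of_real (real (2 * n + 1)) * xc) * An n l r \<theta> \<phi>
                 - of_real (real (2 * n)) * x * xc * An (n - 1) l r \<theta> \<phi>)" ..
next
  note AF = An_form[OF assms(2,3)]
  fix l :: nat
  define a where "a = (real (2 * l + 3) + real (2 * l + 1)) * (r * cos \<theta>)"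
  define b where "b = (real (2 * l + 3) - real (2 * l + 1)) * (r * sin \<theta>)"
  have cx: "of_real (real (2 * l + 3)) * x + of_real (real (2 * l + 1)) * xc = of_real a + b *\<^sub>R uq \<phi>"
    unfolding x_def xc_def a_def b_def by (rule comb)
  have A: "Al (l + 1) l r \<theta> = 1/4 * (a * Al l l r \<theta> - b * Bl l l r \<theta>)"
    using diagAB(1)[of l r \<theta>] unfolding a_def b_def by (simp add: algebra_simps)
  have B: "Bl (l + 1) l r \<theta> = 1/4 * (a * Bl l l r \<theta> + b * Al l l r \<theta>)"
    using diagAB(2)[of l r \<theta>] unfolding a_def b_def by (simp add: algebra_simps)
  show "An (l + 1) l r \<theta> \<phi> =
              (1/4) *\<^sub>R ((of_real (real (2 * l + 3)) * x + of_real (real (2 * l + 1)) * xc) * An l l r \<theta> \<phi>)"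
    unfolding cx AF mulE A B scaleR_add_right scaleR_scaleR ..
next
  fix l :: nat
  show "An l l r \<theta> \<phi> = (of_real (r * sin \<theta> * cos \<phi>) - (r * sin \<theta> * sin \<phi>) *\<^sub>R qe3) ^ l"
    unfolding An_form[OF assms(2,3)] pow_e3 Bl_diag Al_diag by (simp add: power_mult_distrib)
qed


end
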